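(* Let $s\ge1$, $P\ge 2s+1$, $d\ge1$, and let $\mathbf{W}$ and the randomized map $\phi$ be as in the context. Let $\mathbf{G}\in\mathbb{R}^{d\times P}$ be arbitrary and let $\mathbf{N}=[\mathbf{n}_1,\dots,\mathbf{n}_P]\in\mathbb{R}^{d\times P}$ be fixed (chosen independently of the randomness of $\phi$) with $|\{j:\mathbf{n}_j\neq\mathbf{0}\}|\le s$. Then with probability 1, $\phi(\mathbf{G}\mathbf{W}+\mathbf{N})=\{j:\mathbf{n}_j\neq \mathbf{0}\}$.
   Context: Let $\mathbf{C}\in\mathbb{C}^{P\times P}$ be the IDFT matrix $\mathbf{C}_{jk}=\frac{1}{\sqrt P}\exp\!\big(\frac{2\pi i}{P}(j-1)(k-1)\big)$, $j,k=1,\dots,P$; let $\mathbf{C}_L$ be its first $P-2s$ rows and $\mathbf{C}_R$ its last $2s$ rows; $\dagger$ denotes conjugate transpose. Let $\mathbf{A}^{Cyc}\in\{0,1\}^{P\times P}$ be given by $\mathbf{A}^{Cyc}_{k,\ell}=1$ iff $(\ell-k)\bmod P\in\{0,1,\dots,2s\}$. For each $k$, let $\alpha_k=\{\ell:\mathbf{A}^{Cyc}_{k,\ell}=0\}$, and let $\mathbf{q}_k\in\mathbb{C}^{1\times(P-2s-1)}$ be the unique row vector with $[\mathbf{q}_k,\,1]\,(\mathbf{C}_L)_{\cdot,\alpha_k}=\mathbf{0}$. Let $\mathbf{Q}\in\mathbb{C}^{P\times(P-2s-1)}$ have $k$-th row $\mathbf{q}_k$, and $\mathbf{W}=[\mathbf{Q},\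 \mathbf{1}_P]\,\mathbf{C}_L$. The map $\phi$: given $\mathbf{R}\in\mathbb{C}^{d\times P}$, draw $\mathbf{f}\in\mathbb{R}^{1\times d}$ with distribution $\mathcal{N}(\mathbf{1}_{1\times d},\mathbf{I}_d)$; compute $(h_{P-2s},h_{P-2s+1},\dots,h_{P-1})=\mathbf{f}\mathbf{R}\mathbf{C}_R^{\dagger}$; let $\beta=(\beta_0,\dots,\beta_{s-1})$ be any solution of $\sum_{k=0}^{s-1}\beta_k h_{P-s-i+k}=h_{P-i}$ for $i=1,\dots,s$; then for $\ell=0,1,\dots,P-2s-1$ in increasing order set $h_\ell=\sum_{u=0}^{s-1}\beta_u h_{\ell+u-s}$, where indices are taken modulo $P$ (so $h_{-m}=h_{P-m}$); let $\mathbf{h}=(h_0,\dots,h_{P-1})^T$ and $\mathbf{t}=(t_0,\dots,t_{P-1})^T=\mathbf{C}\mathbf{h}$; return $\phi(\mathbf{R})=\{j\in\{1,\dots,P\}:t_{j-1}\neq 0\}$. *)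

theory Defs
  imports "HOL-Probability.Probability"
begin

(* All matrices are functions nat => nat => _ with 0-based indices; row j / column k of the
   paper (1-based) correspond to index j-1 / k-1 here. *)

definition idft :: "nat \<Rightarrow> nat \<Rightarrow> nat \<Rightarrow> complex" where
  "idft P j k = complex_of_real (1 / sqrt (real P)) *
      exp (2 * complex_of_real pi * \<i> * of_nat j * of_nat k / of_nat P)"

(* C_L = first P-2s rows of C *)
definition CL :: "nat \<Rightarrow> nat \<Rightarrow> nat \<Rightarrow> nat \<Rightarrow> complex" where
  "CL P s j k = idft P j k"

definition CR :: "nat \<Rightarrow> nat \<Rightarrow> nat \<Rightarrow> nat \<Rightarrow> complex" where
  "CR P s m k = idft P (P - 2 * s + m) k"

(* A^Cyc_{k,l} = 1 iff (l-k) mod P in {0,...,2s}  (shift-invariant, so 0-based indices are fine) *)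
definition Acyc :: "nat \<Rightarrow> nat \<Rightarrow> nat \<Rightarrow> nat \<Rightarrow> nat" where
  "Acyc P s k l = (if nat ((int l - int k) mod int P) \<le> 2 * s then 1 else 0)"

definition alpha :: "nat \<Rightarrow> nat \<Rightarrow> nat \<Rightarrow> nat set" where
  "alpha P s k = {l. l < P \<and> Acyc P s k l = 0}"

(* q_k : the unique row vector in C^{P-2s-1} with [q_k, 1] (C_L)_{.,alpha_k} = 0;
   represented as a function nat => complex vanishing at indices >= P-2s-1 *)
definition qvec :: "nat \<Rightarrow> nat \<Rightarrow> nat \<Rightarrow> nat \<Rightarrow> complex" where
  "qvec P s k = (THE q. (\<forall>j\<ge>P - 2 * s - 1. q j = 0) \<and>
      (\<forall>l\<in>alpha P s k.
         (\<Sum>j<P - 2 * s - 1. q j * CL P s j l) + 1 * CL P s (P - 2 * s - 1) l = 0))"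

definition Qmat :: "nat \<Rightarrow> nat \<Rightarrow> nat \<Rightarrow> nat \<Rightarrow> complex" where
  "Qmat P s k j = qvec P s k j"

(* W = [Q, 1_P] C_L  (a P x P matrix) *)
definition Wmat :: "nat \<Rightarrow> nat \<Rightarrow> nat \<Rightarrow> nat \<Rightarrow> complex" where
  "Wmat P s k l = (\<Sum>j<P - 2 * s - 1. Qmat P s k j * CL P s j l) + 1 * CL P s (P - 2 * s - 1) l"

(* The known entries (h_{P-2s}, ..., h_{P-1}) = f R C_R^dagger, stored at indices P-2s..P-1;
   R is d x P, f is 1 x d. *)
definition hknown :: "nat \<Rightarrow> nat \<Rightarrow> nat \<Rightarrow> (nat \<Rightarrow> real) \<Rightarrow> (nat \<Rightarrow> nat \<Rightarrow> complex) \<Rightarrow> nat \<Rightarrow> complex" where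
  "hknown P s d f R n =
     (if P - 2 * s \<le> n \<and> n < P then
        (\<Sum>l<P. (\<Sum>i<d. complex_of_real (f i) * R i l) * cnj (CR P s (n - (P - 2 * s)) l))
      else 0)"

definition beta_ok :: "nat \<Rightarrow> nat \<Rightarrow> (nat \<Rightarrow> complex) \<Rightarrow> (nat \<Rightarrow> complex) \<Rightarrow> bool" where
  "beta_ok P s h \<beta> =
     (\<forall>i\<in>{1..s}. (\<Sum>k<s. \<beta> k * h (P - s - i + k)) = h (P - i))"

primrec hiter :: "nat \<Rightarrow> nat \<Rightarrow> (nat \<Rightarrow> complex) \<Rightarrow> (nat \<Rightarrow> complex) \<Rightarrow> nat \<Rightarrow> nat \<Rightarrow> complex" where
  "hiter P s h0 \<beta> 0 = h0"
| "hiter P s h0 \<beta> (Suc l) =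
     (hiter P s h0 \<beta> l)(l := (\<Sum>u<s. \<beta> u * hiter P s h0 \<beta> l ((l + P + u - s) mod P)))"

definition phi_out :: "nat \<Rightarrow> nat \<Rightarrow> nat \<Rightarrow> (nat \<Rightarrow> real) \<Rightarrow> (nat \<Rightarrow> nat \<Rightarrow> complex)
    \<Rightarrow> (nat \<Rightarrow> complex) \<Rightarrow> nat set" where
  "phi_out P s d f R \<beta> =
     (let h = hiter P s (hknown P s d f R) \<beta> (P - 2 * s);
          t = (\<lambda>j. \<Sum>k<P. idft P j k * h k)
      in {j. 1 \<le> j \<and> j \<le> P \<and> t (j - 1) \<noteq> 0})"

definition fdist :: "nat \<Rightarrow> (nat \<Rightarrow> real) measure" where
  "fdist d = PiM {..<d} (\<lambda>_. density lborel (normal_density 1 1))"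

definition GWN :: "nat \<Rightarrow> nat \<Rightarrow> (nat \<Rightarrow> nat \<Rightarrow> real) \<Rightarrow> (nat \<Rightarrow> nat \<Rightarrow> real) \<Rightarrow> nat \<Rightarrow> nat \<Rightarrow> complex" where
  "GWN P s G N i l = (\<Sum>k<P. complex_of_real (G i k) * Wmat P s k l) + complex_of_real (N i l)"

definition colsupp :: "nat \<Rightarrow> nat \<Rightarrow> (nat \<Rightarrow> nat \<Rightarrow> real) \<Rightarrow> nat set" where
  "colsupp P d N = {j. 1 \<le> j \<and> j \<le> P \<and> (\<exists>i<d. N i (j - 1) \<noteq> 0)}"

end

theory Submission
  imports Defs "HOL-Computational_Algebra.Polynomial"
begin


definition om :: "nat \<Rightarrow> complex" where
  "om P = exp (2 * complex_of_real pi * \<i> / of_nat P)"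

lemma idft_om: "idft P j k = complex_of_real (1 / sqrt (real P)) * om P ^ (j * k)"
proof -
  have "2 * complex_of_real pi * \<i> * of_nat j * of_nat k / of_nat P
        = of_nat (j * k) * (2 * complex_of_real pi * \<i> / of_nat P)" by simp
  then show ?thesis unfolding idft_def om_def by (simp only: exp_of_nat_mult)
qed

lemma om_pow: "om P ^ m = exp (2 * complex_of_real pi * \<i> * of_nat m / of_nat P)"
proof -
  have "2 * complex_of_real pi * \<i> * of_nat m / of_nat P
        = of_nat m * (2 * complex_of_real pi * \<i> / of_nat P)" by simp
  then show ?thesis unfolding om_def by (simp only: exp_of_nat_mult)
qed

lemma om_pow_eq_1:
  assumes "P > 0"
  shows "om P ^ m = 1 \<longleftrightarrow> P dvd m"
proof
  assume "om P ^ m = 1"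
  then obtain n :: int where n: "Im (2 * complex_of_real pi * \<i> * of_nat m / of_nat P) = of_int (2 * n) * pi"
    unfolding om_pow exp_eq_1 by blast
  have "Im (2 * complex_of_real pi * \<i> * of_nat m / of_nat P) = 2 * pi * real m / real P"
    by (simp add: Im_divide_of_nat)
  with n have "2 * pi * real m / real P = 2 * pi * real_of_int n" by simp
  then have "real m = real P * real_of_int n" using assms by (simp add: field_simps)
  then have "int m = int P * n" by (metis of_int_eq_iff of_int_mult of_int_of_nat_eq)
  then have "int P dvd int m" by simp
  then show "P dvd m" by simp
next
  assume "P dvd m"
  then obtain q where q: "m = P * q" by blast
  have "om P ^ m = (om P ^ P) ^ q" by (simp add: q power_mult)
  also have "om P ^ P = 1" unfolding om_def using assms
    by (simp only: exp_of_nat_mult[symmetric]) simp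
  finally show "om P ^ m = 1" by simp
qed

lemma om_nz: "om P \<noteq> 0" unfolding om_def by simp

lemma om_cnj: "om P * cnj (om P) = 1"
proof -
  have "norm (om P) = 1" unfolding om_def by (simp add: norm_exp_eq_Re)
  then show ?thesis using complex_norm_square[of "om P"] by simp
qed

lemma om_ne1:
  assumes "P > 0" "0 < m" "m < P" shows "om P ^ m \<noteq> 1"
  using assms om_pow_eq_1[of P m] by (auto dest: dvd_imp_le)

lemma orth0:
  assumes "j < P" "l < P"
  shows "(\<Sum>k<P. (om P ^ j * cnj (om P) ^ l) ^ k) = (if j = l then of_nat P else 0)"
proof -
  have P: "P > 0" using assms by simp
  define x where "x = om P ^ j * cnj (om P) ^ l"
  have xP: "x ^ P = 1"
  proof -
    have "x ^ P = (om P ^ P) ^ j * cnj (om P ^ P) ^ l"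
      by (simp add: x_def power_mult_distrib power_mult[symmetric] mult.commute)
    also have "om P ^ P = 1" using om_pow_eq_1[OF P, of P] by simp
    finally show ?thesis by simp
  qed
  show ?thesis
  proof (cases "j = l")
    case True
    then have "x = (om P * cnj (om P)) ^ l" by (simp add: x_def power_mult_distrib)
    then have "x = 1" by (simp add: om_cnj)
    then have "(\<Sum>k<P. x ^ k) = of_nat P" by simp
    then show ?thesis using True by (simp add: x_def)
  next
    case False
    have "x \<noteq> 1"
    proof (cases "l < j")
      case True
      have "x = om P ^ (j - l) * (om P * cnj (om P)) ^ l"
        using True by (simp add: x_def power_mult_distrib power_add[symmetric])
      then have "x = om P ^ (j - l)" by (simp add: om_cnj)
      then show ?thesis using om_ne1[OF P, of "j - l"] True assms by simp
    next
      case False2: False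
      then have jl: "j < l" using False by simp
      have "x = cnj (om P) ^ (l - j) * (om P * cnj (om P)) ^ j"
        using jl by (simp add: x_def power_mult_distrib power_add[symmetric] mult_ac)
      then have "x = cnj (om P ^ (l - j))" by (simp add: om_cnj)
      then show ?thesis using om_ne1[OF P, of "l - j"] jl assms
        by (metis complex_cnj_one complex_cnj_cnj diff_less_mono2 not_less0 zero_less_diff diff_le_self le_less_trans)
    qed
    then have "(\<Sum>k<P. x ^ k) = 0" by (simp add: geometric_sum xP)
    then show ?thesis using False by (simp add: x_def)
  qed
qed

lemma orth:
  assumes "j < P" "l < P"
  shows "(\<Sum>k<P. idft P j k * cnj (idft P l k)) = (if j = l then 1 else 0)"
proof -
  have P: "P > 0" using assms by simp
  have c2: "complex_of_real (1 / sqrt (real P)) * complex_of_real (1 / sqrt (real P)) = 1 / of_nat P"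
    using P by (simp flip: of_real_mult)
  have "(\<Sum>k<P. idft P j k * cnj (idft P l k)) = (\<Sum>k<P. (1 / of_nat P) * (om P ^ j * cnj (om P) ^ l) ^ k)"
    unfolding idft_om
    by (intro sum.cong refl) (simp add: c2[symmetric] power_mult_distrib power_mult mult_ac flip: power_mult)
  also have "\<dots> = (1 / of_nat P) * (if j = l then of_nat P else 0)"
    by (simp only: sum_distrib_left[symmetric] orth0[OF assms])
  finally show ?thesis using P by simp
qed

lemma idft_sym: "idft P j k = idft P k j"
  by (simp add: idft_def mult_ac)

lemma Wperp:
  assumes "P \<ge> 2 * s + 1" "P - 2 * s \<le> n" "n < P"
  shows "(\<Sum>l<P. Wmat P s k l * cnj (idft P n l)) = 0"
proof -
  define M where "M = P - 2 * s - 1"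
  have o: "(\<Sum>l<P. idft P j l * cnj (idft P n l)) = 0" if "j \<le> M" for j
    using orth[of j P n] that assms unfolding M_def by auto
  have "(\<Sum>l<P. Wmat P s k l * cnj (idft P n l))
      = (\<Sum>l<P. (\<Sum>j<M. Qmat P s k j * (idft P j l * cnj (idft P n l))) + idft P M l * cnj (idft P n l))"
    unfolding Wmat_def CL_def M_def[symmetric]
    by (intro sum.cong refl) (simp add: distrib_right sum_distrib_right mult.assoc)
  also have "\<dots> = (\<Sum>j<M. Qmat P s k j * (\<Sum>l<P. idft P j l * cnj (idft P n l))) + (\<Sum>l<P. idft P M l * cnj (idft P n l))"
    by (simp only: sum.distrib sum_distrib_left sum.swap[of _ "{..<P}" "{..<M}"])
  also have "\<dots> = 0" using o by simp
  finally show ?thesis .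
qed

definition vv :: "nat \<Rightarrow> (nat \<Rightarrow> real) \<Rightarrow> (nat \<Rightarrow> nat \<Rightarrow> real) \<Rightarrow> nat \<Rightarrow> real" where
  "vv d f N l = (\<Sum>i<d. f i * N i l)"

definition HH :: "nat \<Rightarrow> nat \<Rightarrow> (nat \<Rightarrow> real) \<Rightarrow> (nat \<Rightarrow> nat \<Rightarrow> real) \<Rightarrow> nat \<Rightarrow> complex" where
  "HH P d f N n = (\<Sum>l<P. complex_of_real (vv d f N l) * cnj (idft P n l))"

lemma hknown_eq:
  assumes "P \<ge> 2 * s + 1"
  shows "hknown P s d f (GWN P s G N) n = (if P - 2 * s \<le> n \<and> n < P then HH P d f N n else 0)"
proof (cases "P - 2 * s \<le> n \<and> n < P")
  case True
  define g where "g k = (\<Sum>i<d. complex_of_real (f i) * complex_of_real (G i k))" for k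
  have CR: "CR P s (n - (P - 2 * s)) l = idft P n l" for l
    unfolding CR_def using True by simp
  have inner: "(\<Sum>i<d. complex_of_real (f i) * GWN P s G N i l)
      = (\<Sum>k<P. g k * Wmat P s k l) + complex_of_real (vv d f N l)" for l
  proof -
    have "(\<Sum>i<d. complex_of_real (f i) * GWN P s G N i l)
       = (\<Sum>i<d. (\<Sum>k<P. complex_of_real (f i) * complex_of_real (G i k) * Wmat P s k l) + complex_of_real (f i * N i l))"
      unfolding GWN_def by (intro sum.cong refl) (simp add: distrib_left sum_distrib_left mult.assoc)
    also have "\<dots> = (\<Sum>k<P. g k * Wmat P s k l) + complex_of_real (vv d f N l)"
      unfolding g_def vv_def of_real_sum
      by (simp only: sum.distrib sum_distrib_right sum.swap[of _ "{..<d}" "{..<P}"])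
    finally show ?thesis .
  qed
  have "hknown P s d f (GWN P s G N) n
      = (\<Sum>l<P. ((\<Sum>k<P. g k * Wmat P s k l) + complex_of_real (vv d f N l)) * cnj (idft P n l))"
    unfolding hknown_def using True by (simp add: CR inner)
  also have "\<dots> = (\<Sum>l<P. (\<Sum>k<P. g k * (Wmat P s k l * cnj (idft P n l))) + complex_of_real (vv d f N l) * cnj (idft P n l))"
    by (intro sum.cong refl) (simp add: distrib_right sum_distrib_right mult.assoc)
  also have "\<dots> = (\<Sum>k<P. g k * (\<Sum>l<P. Wmat P s k l * cnj (idft P n l))) + HH P d f N n"
    unfolding HH_def sum.distrib sum_distrib_left by (subst sum.swap) (rule refl)
  also have "\<dots> = HH P d f N n"
    using Wperp[OF assms] True by simp
  finally show ?thesis using True by simp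
next
  case False
  then show ?thesis unfolding hknown_def by auto
qed



lemma poly_sum_lt:
  fixes L :: "'a::comm_ring_1 poly"
  assumes "degree L < s"
  shows "poly L x = (\<Sum>t<s. coeff L t * x ^ t)"
proof -
  have "poly L x = (\<Sum>t\<le>degree L. coeff L t * x ^ t)" by (rule poly_altdef)
  also have "\<dots> = (\<Sum>t<s. coeff L t * x ^ t)"
    using assms by (intro sum.mono_neutral_left) (auto simp: coeff_eq_0)
  finally show ?thesis .
qed

lemma vand_zero:
  fixes z e :: "nat \<Rightarrow> complex"
  assumes fin: "finite A" and cA: "card A \<le> s" and inj: "inj_on z A"
    and h: "\<And>t. t < s \<Longrightarrow> (\<Sum>l\<in>A. e l * z l ^ t) = 0"
    and l0: "l0 \<in> A"
  shows "e l0 = 0"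
proof -
  define L where "L = (\<Prod>l\<in>A - {l0}. [:- z l, 1:])"
  have "degree L = (\<Sum>l\<in>A - {l0}. degree [:- z l, 1:])"
    unfolding L_def by (rule degree_prod_eq_sum_degree) auto
  also have "\<dots> = card (A - {l0})" by simp
  finally have dL: "degree L < s" using card_Diff1_less[OF fin l0] cA by linarith
  have pz: "poly L (z l) = (\<Prod>m\<in>A - {l0}. z l - z m)" for l
    unfolding L_def by (simp add: poly_prod)
  have "(\<Sum>l\<in>A. e l * poly L (z l)) = (\<Sum>t<s. coeff L t * (\<Sum>l\<in>A. e l * z l ^ t))"
    unfolding poly_sum_lt[OF dL] sum_distrib_left
    by (subst sum.swap) (intro sum.cong refl, simp add: mult_ac)
  also have "\<dots> = 0" using h by simp
  finally have s0: "(\<Sum>l\<in>A. e l * poly L (z l)) = 0" .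
  have "(\<Sum>l\<in>A. e l * poly L (z l)) = e l0 * poly L (z l0)"
  proof (rule sum.remove[OF fin l0, THEN trans])
    have "(\<Sum>l\<in>A - {l0}. e l * poly L (z l)) = 0"
    proof (intro sum.neutral ballI)
      fix l assume l: "l \<in> A - {l0}"
      have "poly L (z l) = 0" unfolding pz using fin l by (subst prod_zero_iff) auto
      then show "e l * poly L (z l) = 0" by simp
    qed
    then show "e l0 * poly L (z l0) + (\<Sum>l\<in>A - {l0}. e l * poly L (z l)) = e l0 * poly L (z l0)" by simp
  qed
  moreover have "poly L (z l0) \<noteq> 0"
  proof -
    have "\<forall>m\<in>A-{l0}. z l0 - z m \<noteq> 0" using inj l0 by (auto simp: inj_on_def)
    then show ?thesis unfolding pz using fin by (subst prod_zero_iff) auto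
  qed
  ultimately show ?thesis using s0 by simp
qed

lemma rec_of_roots:
  fixes z c \<beta> :: "nat \<Rightarrow> complex"
  assumes "\<And>l. l \<in> A \<Longrightarrow> (\<Sum>k<s. \<beta> k * z l ^ k) = z l ^ s"
  shows "(\<Sum>k<s. \<beta> k * (\<Sum>l\<in>A. c l * z l ^ (m + k))) = (\<Sum>l\<in>A. c l * z l ^ (m + s))"
proof -
  have "(\<Sum>k<s. \<beta> k * (\<Sum>l\<in>A. c l * z l ^ (m + k))) = (\<Sum>l\<in>A. c l * z l ^ m * (\<Sum>k<s. \<beta> k * z l ^ k))"
    unfolding sum_distrib_left by (subst sum.swap) (intro sum.cong refl, simp add: power_add mult_ac)
  also have "\<dots> = (\<Sum>l\<in>A. c l * z l ^ (m + s))"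
    using assms by (simp add: power_add mult_ac)
  finally show ?thesis .
qed

lemma roots_of_rec:
  fixes z c \<beta> :: "nat \<Rightarrow> complex"
  assumes fin: "finite A" and cA: "card A \<le> s" and inj: "inj_on z A"
    and nz: "\<And>l. l \<in> A \<Longrightarrow> c l \<noteq> 0 \<and> z l \<noteq> 0"
    and h: "\<And>t. t < s \<Longrightarrow> (\<Sum>k<s. \<beta> k * (\<Sum>l\<in>A. c l * z l ^ (t0 + t + k))) = (\<Sum>l\<in>A. c l * z l ^ (t0 + t + s))"
    and l0: "l0 \<in> A"
  shows "(\<Sum>k<s. \<beta> k * z l0 ^ k) = z l0 ^ s"
proof -
  define e where "e l = c l * z l ^ t0 * (z l ^ s - (\<Sum>k<s. \<beta> k * z l ^ k))" for l
  have "e l0 = 0"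
  proof (rule vand_zero[OF fin cA inj _ l0])
    fix t assume t: "t < s"
    have "(\<Sum>l\<in>A. e l * z l ^ t) = (\<Sum>l\<in>A. c l * z l ^ (t0 + t + s)) - (\<Sum>l\<in>A. c l * z l ^ (t0 + t) * (\<Sum>k<s. \<beta> k * z l ^ k))"
      unfolding e_def sum_subtractf[symmetric]
      by (intro sum.cong refl) (simp add: right_diff_distrib left_diff_distrib power_add mult_ac)
    also have "(\<Sum>l\<in>A. c l * z l ^ (t0 + t) * (\<Sum>k<s. \<beta> k * z l ^ k)) = (\<Sum>k<s. \<beta> k * (\<Sum>l\<in>A. c l * z l ^ (t0 + t + k)))"
      unfolding sum_distrib_left by (subst sum.swap) (intro sum.cong refl, simp add: power_add mult_ac)
    finally show "(\<Sum>l\<in>A. e l * z l ^ t) = 0" using h[OF t] by simp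
  qed
  then show ?thesis using nz[OF l0] unfolding e_def by simp
qed

lemma exists_rec:
  fixes z :: "nat \<Rightarrow> complex"
  assumes fin: "finite A" and cA: "card A \<le> s"
  shows "\<exists>\<beta>. \<forall>l\<in>A. (\<Sum>k<s. \<beta> k * z l ^ k) = z l ^ s"
proof -
  define p where "p = monom 1 (s - card A) * (\<Prod>l\<in>A. [:- z l, 1:])"
  have dprod: "degree (\<Prod>l\<in>A. [:- z l, 1:]) = card A"
    by (subst degree_prod_eq_sum_degree) auto
  have dp: "degree p = s"
    unfolding p_def using cA
    by (subst degree_mult_eq) (use fin in \<open>auto simp: dprod degree_monom_eq prod_zero_iff\<close>)
  have lp: "coeff p s = 1"
  proof -
    have "coeff p s = lead_coeff p" using dp by simp
    also have "\<dots> = 1" unfolding p_def lead_coeff_mult lead_coeff_prod by (simp add: degree_monom_eq)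
    finally show ?thesis .
  qed
  have pl: "poly p x = (\<Sum>k<s. coeff p k * x ^ k) + x ^ s" for x
  proof -
    have "poly p x = (\<Sum>k<Suc s. coeff p k * x ^ k)"
      using poly_altdef[of p x] dp by (simp only: lessThan_Suc_atMost)
    then show ?thesis using lp by simp
  qed
  have "(\<Sum>k<s. (- coeff p k) * z l ^ k) = z l ^ s" if "l \<in> A" for l
  proof -
    have "poly p (z l) = 0" unfolding p_def using that fin by (auto simp: poly_prod prod_zero_iff)
    then have e: "(\<Sum>k<s. coeff p k * z l ^ k) + z l ^ s = 0" using pl[of "z l"] by simp
    have "(\<Sum>k<s. (- coeff p k) * z l ^ k) = - (\<Sum>k<s. coeff p k * z l ^ k)"
      by (simp only: mult_minus_left sum_negf)
    also have "(\<Sum>k<s. coeff p k * z l ^ k) = - (z l ^ s)" using e by (simp only: eq_neg_iff_add_eq_0)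
    finally show ?thesis by simp
  qed
  then have "\<forall>l\<in>A. (\<Sum>k<s. (\<lambda>k. - coeff p k) k * z l ^ k) = z l ^ s" by simp
  then show ?thesis by (rule exI[where x="\<lambda>k. - coeff p k"])
qed



definition zz :: "nat \<Rightarrow> nat \<Rightarrow> complex" where "zz P l = cnj (om P) ^ l"
definition cc :: "nat \<Rightarrow> nat \<Rightarrow> (nat \<Rightarrow> real) \<Rightarrow> (nat \<Rightarrow> nat \<Rightarrow> real) \<Rightarrow> nat \<Rightarrow> complex" where
  "cc P d f N l = complex_of_real (vv d f N l) * complex_of_real (1 / sqrt (real P))"

lemma HH_z: "HH P d f N n = (\<Sum>l<P. cc P d f N l * zz P l ^ n)"
  unfolding HH_def cc_def zz_def idft_om
  by (intro sum.cong refl) (simp add: power_mult[symmetric] mult.commute)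

lemma HH_A: "HH P d f N n = (\<Sum>l\<in>{l. l < P \<and> vv d f N l \<noteq> 0}. cc P d f N l * zz P l ^ n)"
  unfolding HH_z by (rule sum.mono_neutral_right) (auto simp: cc_def)

lemma zz_P: "P > 0 \<Longrightarrow> zz P l ^ P = 1"
proof -
  assume P: "P > 0"
  have "zz P l ^ P = cnj ((om P ^ P) ^ l)" unfolding zz_def by (simp add: power_mult[symmetric] mult.commute)
  also have "om P ^ P = 1" using om_pow_eq_1[OF P, of P] by simp
  finally show ?thesis by simp
qed

lemma zz_nz: "zz P l \<noteq> 0" unfolding zz_def using om_nz[of P] by simp

lemma zz_inj: assumes P: "P > 0" shows "inj_on (zz P) {..<P}"
proof (rule inj_onI)
  have key: "a = b" if ab: "a \<le> b" "b < P" and eq: "zz P a = zz P b" for a b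
  proof (rule ccontr)
    assume "a \<noteq> b"
    then have lt: "0 < b - a" "b - a < P" using ab by auto
    have "om P ^ b = om P ^ a * om P ^ (b - a)" using ab by (simp add: power_add[symmetric])
    moreover have "om P ^ a = om P ^ b" using eq unfolding zz_def by (metis complex_cnj_cnj complex_cnj_power)
    ultimately have "om P ^ (b - a) = 1" using om_nz[of P] by simp
    then show False using om_ne1[OF P lt] by simp
  qed
  fix a b assume "a \<in> {..<P}" "b \<in> {..<P}" "zz P a = zz P b"
  then show "a = b" using key[of a b] key[of b a] by (cases "a \<le> b") auto
qed

lemma pow_mod: "x ^ P = (1::complex) \<Longrightarrow> x ^ n = x ^ (n mod P)"
proof -
  assume x: "x ^ P = 1"
  have "x ^ n = x ^ (P * (n div P) + n mod P)" by simp
  also have "\<dots> = (x ^ P) ^ (n div P) * x ^ (n mod P)" by (simp only: power_add power_mult)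
  finally show ?thesis using x by simp
qed

lemma HH_mod: "P > 0 \<Longrightarrow> HH P d f N (n mod P) = HH P d f N n"
  unfolding HH_z using zz_P pow_mod by (intro sum.cong refl) metis

lemma hiter_correct:
  fixes Hf hk \<beta> :: "nat \<Rightarrow> complex"
  assumes P: "P \<ge> 2 * s + 1"
    and hk: "\<And>n. P - 2 * s \<le> n \<Longrightarrow> n < P \<Longrightarrow> hk n = Hf n"
    and per: "\<And>n. Hf (n mod P) = Hf n"
    and rec: "\<And>m. (\<Sum>u<s. \<beta> u * Hf (m + u)) = Hf (m + s)"
  shows "l \<le> P - 2 * s \<Longrightarrow> n < l \<or> (P - 2 * s \<le> n \<and> n < P) \<Longrightarrow> hiter P s hk \<beta> l n = Hf n"
proof (induction l arbitrary: n)
  case 0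
  then show ?case using hk by simp
next
  case (Suc l)
  have IH: "\<And>n. n < l \<or> (P - 2 * s \<le> n \<and> n < P) \<Longrightarrow> hiter P s hk \<beta> l n = Hf n"
    using Suc.IH Suc.prems(1) by simp
  show ?case
  proof (cases "n = l")
    case False
    then show ?thesis using Suc.prems IH by auto
  next
    case True
    have idx: "hiter P s hk \<beta> l ((l + P + u - s) mod P) = Hf ((l + P - s) + u)" if u: "u < s" for u
    proof -
      have e: "l + P + u - s = (l + P - s) + u" using P by simp
      have "(l + P + u - s) mod P < l \<or> (P - 2 * s \<le> (l + P + u - s) mod P \<and> (l + P + u - s) mod P < P)"
      proof (cases "s \<le> l + u")
        case True
        then have "l + P + u - s = (l + u - s) + P" by simp
        then have "(l + P + u - s) mod P = ((l + u - s) + P) mod P" by (simp only:)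
        also have "\<dots> = (l + u - s) mod P" by (rule mod_add_self2)
        also have "\<dots> = l + u - s" using Suc.prems(1) u P by (intro mod_less) linarith
        finally have "(l + P + u - s) mod P = l + u - s" .
        moreover have "l + u - s < l" using True u by linarith
        ultimately show ?thesis by simp
      next
        case False
        then have "(l + P + u - s) mod P = l + P + u - s" using P by simp
        moreover have "P - 2 * s \<le> l + P + u - s \<and> l + P + u - s < P" using False P by linarith
        ultimately show ?thesis by simp
      qed
      then have "hiter P s hk \<beta> l ((l + P + u - s) mod P) = Hf ((l + P + u - s) mod P)" by (rule IH)
      also have "\<dots> = Hf ((l + P - s) + u)" using per e by simp
      finally show ?thesis .
    qed
    have "hiter P s hk \<beta> (Suc l) n = (\<Sum>u<s. \<beta> u * hiter P s hk \<beta> l ((l + P + u - s) mod P))"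
      using True by simp
    also have "\<dots> = (\<Sum>u<s. \<beta> u * Hf ((l + P - s) + u))" using idx by simp
    also have "\<dots> = Hf (l + P - s + s)" by (rule rec)
    also have "l + P - s + s = l + P" using P by simp
    also have "Hf (l + P) = Hf l" using per[of "l + P"] per[of l] by simp
    finally show ?thesis using True by simp
  qed
qed

lemma t_eq:
  assumes "j < P"
  shows "(\<Sum>k<P. idft P j k * HH P d f N k) = complex_of_real (vv d f N j)"
proof -
  have "(\<Sum>k<P. idft P j k * HH P d f N k)
      = (\<Sum>l<P. complex_of_real (vv d f N l) * (\<Sum>k<P. idft P j k * cnj (idft P l k)))"
    unfolding HH_def sum_distrib_left
    by (subst sum.swap) (intro sum.cong refl, subst idft_sym, rule mult.left_commute)
  also have "\<dots> = (\<Sum>l<P. complex_of_real (vv d f N l) * (if j = l then 1 else 0))"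
    using assms by (intro sum.cong refl) (simp add: orth)
  also have "\<dots> = complex_of_real (vv d f N j)" using assms by (simp add: if_distrib cong: if_cong)
  finally show ?thesis .
qed



lemma main_det:
  assumes P: "P \<ge> 2 * s + 1" and card: "card {l. l < P \<and> vv d f N l \<noteq> 0} \<le> s"
  shows "(\<exists>\<beta>. beta_ok P s (hknown P s d f (GWN P s G N)) \<beta>) \<and>
         (\<forall>\<beta>. beta_ok P s (hknown P s d f (GWN P s G N)) \<beta> \<longrightarrow>
            phi_out P s d f (GWN P s G N) \<beta> = {j. 1 \<le> j \<and> j \<le> P \<and> vv d f N (j - 1) \<noteq> 0})"
proof -
  define hk where "hk = hknown P s d f (GWN P s G N)"
  define A where "A = {l. l < P \<and> vv d f N l \<noteq> 0}"
  define c where "c = cc P d f N"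
  define z where "z = zz P"
  define H where "H = HH P d f N"
  have P0: "P > 0" using P by simp
  have hkH: "hk n = H n" if "P - 2 * s \<le> n" "n < P" for n
    unfolding hk_def H_def using hknown_eq[OF P, of d f G N n] that by simp
  have HA: "H n = (\<Sum>l\<in>A. c l * z l ^ n)" for n
    unfolding H_def A_def c_def z_def by (rule HH_A)
  have finA: "finite A" unfolding A_def by simp
  have cardA: "card A \<le> s" using card unfolding A_def .
  have injA: "inj_on z A" unfolding z_def A_def
    by (rule inj_on_subset[OF zz_inj[OF P0]]) auto
  have nz: "c l \<noteq> 0 \<and> z l \<noteq> 0" if "l \<in> A" for l
    using that P0 unfolding A_def c_def z_def cc_def by (simp add: zz_nz)
  have bok_iff: "beta_ok P s hk \<beta> \<longleftrightarrow> (\<forall>i\<in>{1..s}. (\<Sum>k<s. \<beta> k * H (P - s - i + k)) = H (P - i))" for \<beta>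
  proof -
    have "(\<Sum>k<s. \<beta> k * hk (P - s - i + k)) = (\<Sum>k<s. \<beta> k * H (P - s - i + k))" if "i \<in> {1..s}" for i
      using that P by (intro sum.cong refl arg_cong2[where f="(*)"] hkH) auto
    moreover have "hk (P - i) = H (P - i)" if "i \<in> {1..s}" for i
      using that P by (intro hkH) auto
    ultimately show ?thesis unfolding beta_ok_def by auto
  qed
  have rec_from: "(\<Sum>k<s. \<beta> k * H (m + k)) = H (m + s)"
    if "\<forall>l\<in>A. (\<Sum>k<s. \<beta> k * z l ^ k) = z l ^ s" for \<beta> m
    unfolding HA using that by (intro rec_of_roots) auto
  have ex: "\<exists>\<beta>. beta_ok P s hk \<beta>"
  proof -
    obtain \<beta> where b: "\<forall>l\<in>A. (\<Sum>k<s. \<beta> k * z l ^ k) = z l ^ s"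
      using exists_rec[OF finA cardA] by blast
    have "(\<Sum>k<s. \<beta> k * H (P - s - i + k)) = H (P - i)" if "i \<in> {1..s}" for i
    proof -
      have "P - i = (P - s - i) + s" using that P by auto
      then show ?thesis using rec_from[OF b, of "P - s - i"] by simp
    qed
    then show ?thesis using bok_iff by blast
  qed
  have all: "phi_out P s d f (GWN P s G N) \<beta> = {j. 1 \<le> j \<and> j \<le> P \<and> vv d f N (j - 1) \<noteq> 0}"
    if bok: "beta_ok P s hk \<beta>" for \<beta>
  proof -
    have bok': "\<forall>i\<in>{1..s}. (\<Sum>k<s. \<beta> k * H (P - s - i + k)) = H (P - i)"
      using bok bok_iff by blast
    have roots: "\<forall>l\<in>A. (\<Sum>k<s. \<beta> k * z l ^ k) = z l ^ s"
    proof
      fix l0 assume l0: "l0 \<in> A"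
      show "(\<Sum>k<s. \<beta> k * z l0 ^ k) = z l0 ^ s"
      proof (rule roots_of_rec[OF finA cardA injA nz _ l0])
        fix t assume t: "t < s"
        have i: "s - t \<in> {1..s}" using t by auto
        have e1: "P - s - (s - t) + k = (P - 2 * s) + t + k" for k using t P by auto
        have e2: "P - (s - t) = (P - 2 * s) + t + s" using t P by auto
        from bok'[rule_format, OF i]
        have "(\<Sum>k<s. \<beta> k * H ((P - 2 * s) + t + k)) = H ((P - 2 * s) + t + s)"
          unfolding e1 e2 .
        then show "(\<Sum>k<s. \<beta> k * (\<Sum>l\<in>A. c l * z l ^ (P - 2 * s + t + k))) = (\<Sum>l\<in>A. c l * z l ^ (P - 2 * s + t + s))"
          unfolding HA .
      qed auto
    qed
    have hH: "hiter P s hk \<beta> (P - 2 * s) n = H n" if "n < P" for n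
    proof (rule hiter_correct[OF P])
      show "\<And>n. P - 2 * s \<le> n \<Longrightarrow> n < P \<Longrightarrow> hk n = H n" by (rule hkH)
      show "\<And>n. H (n mod P) = H n" unfolding H_def by (rule HH_mod[OF P0])
      show "\<And>m. (\<Sum>u<s. \<beta> u * H (m + u)) = H (m + s)" by (rule rec_from[OF roots])
      show "n < P - 2 * s \<or> P - 2 * s \<le> n \<and> n < P" using that by auto
    qed simp
    have tj: "(\<Sum>k<P. idft P j k * hiter P s hk \<beta> (P - 2 * s) k) = complex_of_real (vv d f N j)"
      if "j < P" for j
    proof -
      have "(\<Sum>k<P. idft P j k * hiter P s hk \<beta> (P - 2 * s) k) = (\<Sum>k<P. idft P j k * HH P d f N k)"
        using hH unfolding H_def by simp
      also have "\<dots> = complex_of_real (vv d f N j)" by (rule t_eq[OF that])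
      finally show ?thesis .
    qed
    show ?thesis
      unfolding phi_out_def Let_def hk_def[symmetric]
    proof (intro Collect_cong conj_cong refl)
      fix j assume "1 \<le> j" "j \<le> P"
      then have "j - 1 < P" by simp
      then show "((\<Sum>k<P. idft P (j - 1) k * hiter P s hk \<beta> (P - 2 * s) k) \<noteq> 0) = (vv d f N (j - 1) \<noteq> 0)"
        using tj by simp
    qed
  qed
  show ?thesis using ex all unfolding hk_def by blast
qed



lemma ae_lin:
  fixes a :: "nat \<Rightarrow> real"
  assumes i0: "i0 < d" "a i0 \<noteq> 0"
  shows "AE f in fdist d. (\<Sum>i<d. f i * a i) \<noteq> 0"
proof -
  define M where "M = (\<lambda>_::nat. density lborel (normal_density 1 1))"
  interpret PS: product_sigma_finite M
    unfolding product_sigma_finite_def M_def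
    using prob_space_normal_density[of 1 1] prob_space_imp_sigma_finite by simp
  define I where "I = {..<d} - {i0}"
  have dI: "{..<d} = insert i0 I" using i0 unfolding I_def by auto
  have fI: "finite I" "i0 \<notin> I" unfolding I_def by auto
  define S where "S = {f \<in> space (PiM {..<d} M). (\<Sum>i<d. f i * a i) = 0}"
  have g: "(\<lambda>f. \<Sum>i<d. f i * a i) \<in> borel_measurable (PiM {..<d} M)"
  proof (intro borel_measurable_sum borel_measurable_times borel_measurable_const)
    fix i assume "i \<in> {..<d}"
    then have "(\<lambda>x. x i) \<in> PiM {..<d} M \<rightarrow>\<^sub>M M i" by (rule measurable_component_singleton)
    then show "(\<lambda>x. x i) \<in> borel_measurable (PiM {..<d} M)"
      by (subst measurable_cong_sets[of _ "PiM {..<d} M" "borel" "M i"]) (simp_all add: M_def)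
  qed
  have Ssets: "S \<in> sets (PiM {..<d} M)"
    using measurable_sets[OF g, of "{0}"] unfolding S_def by (simp add: vimage_def Int_def conj_commute)
  have "emeasure (PiM {..<d} M) S = integral\<^sup>N (PiM (insert i0 I) M) (indicator S)"
    using Ssets dI by simp
  also have "\<dots> = (\<integral>\<^sup>+ x. (\<integral>\<^sup>+ y. indicator S (x(i0 := y)) \<partial>(M i0)) \<partial>(PiM I M))"
    by (rule PS.product_nn_integral_insert[OF fI]) (use Ssets dI in simp)
  also have "\<dots> = (\<integral>\<^sup>+ x. 0 \<partial>(PiM I M))"
  proof (rule nn_integral_cong)
    fix x assume x: "x \<in> space (PiM I M)"
    define c where "c = - (\<Sum>i\<in>I. x i * a i) / a i0"
    have "(\<integral>\<^sup>+ y. indicator S (x(i0 := y)) \<partial>(M i0)) \<le> (\<integral>\<^sup>+ y. indicator {c} y \<partial>(M i0))"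
    proof (rule nn_integral_mono)
      fix y
      have "(\<Sum>i<d. (x(i0 := y)) i * a i) = y * a i0 + (\<Sum>i\<in>I. x i * a i)"
        unfolding dI using fI by (simp add: sum.insert) (intro sum.cong, auto)
      then show "indicator S (x(i0 := y)) \<le> (indicator {c} y :: ennreal)"
        using i0 unfolding S_def c_def by (auto simp: indicator_def field_simps)
    qed
    also have "\<dots> = emeasure (M i0) {c}" by (simp add: M_def)
    also have "\<dots> = 0"
    proof -
      have "emeasure (density lborel (normal_density 1 1)) {c} = (\<integral>\<^sup>+ y. ennreal (normal_density 1 1 y) * indicator {c} y \<partial>lborel)"
        by (rule emeasure_density) auto
      also have "\<dots> = 0" by simp
      finally show ?thesis by (simp add: M_def)
    qed
    finally show "(\<integral>\<^sup>+ y. indicator S (x(i0 := y)) \<partial>(M i0)) = 0" by simp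
  qed
  also have "\<dots> = 0" by simp
  finally have "emeasure (PiM {..<d} M) S = 0" .
  then show ?thesis
    unfolding fdist_def M_def[symmetric]
    by (subst AE_iff_measurable[OF Ssets]) (auto simp: S_def)
qed


theorem lemma4:
  fixes s P d :: nat and G N :: "nat \<Rightarrow> nat \<Rightarrow> real"
  assumes "s \<ge> 1" and "P \<ge> 2 * s + 1" and "d \<ge> 1"
    and "card (colsupp P d N) \<le> s"
  shows "AE f in fdist d.
           (\<exists>\<beta>. beta_ok P s (hknown P s d f (GWN P s G N)) \<beta>) \<and>
           (\<forall>\<beta>. beta_ok P s (hknown P s d f (GWN P s G N)) \<beta> \<longrightarrow>
                 phi_out P s d f (GWN P s G N) \<beta> = colsupp P d N)"
proof -
  define Sset where "Sset = {l. l < P \<and> (\<exists>i<d. N i l \<noteq> 0)}"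
  have cs: "colsupp P d N = Suc ` Sset"
  proof (rule set_eqI)
    fix j
    show "j \<in> colsupp P d N \<longleftrightarrow> j \<in> Suc ` Sset"
    proof
      assume "j \<in> colsupp P d N"
      then have "j = Suc (j - 1)" "j - 1 \<in> Sset" unfolding colsupp_def Sset_def by auto
      then show "j \<in> Suc ` Sset" by blast
    next
      assume "j \<in> Suc ` Sset"
      then show "j \<in> colsupp P d N" unfolding colsupp_def Sset_def by auto
    qed
  qed
  have cardS: "card Sset \<le> s" using assms(4) unfolding cs by (simp add: card_image)
  have "AE f in fdist d. \<forall>l\<in>Sset. vv d f N l \<noteq> 0"
  proof (rule AE_finite_allI)
    show "finite Sset" unfolding Sset_def by simp
  next
    fix l assume "l \<in> Sset"
    then obtain i0 where "i0 < d" "N i0 l \<noteq> 0" unfolding Sset_def by blast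
    then show "AE f in fdist d. vv d f N l \<noteq> 0"
      unfolding vv_def by (rule ae_lin)
  qed
  then show ?thesis
  proof (rule eventually_mono)
    fix f assume H: "\<forall>l\<in>Sset. vv d f N l \<noteq> 0"
    have eqA: "{l. l < P \<and> vv d f N l \<noteq> 0} = Sset"
    proof (rule set_eqI)
      fix l
      have "vv d f N l \<noteq> 0 \<Longrightarrow> \<exists>i<d. N i l \<noteq> 0"
        unfolding vv_def by (rule ccontr) simp
      then show "l \<in> {l. l < P \<and> vv d f N l \<noteq> 0} \<longleftrightarrow> l \<in> Sset"
        using H unfolding Sset_def by auto
    qed
    have md: "(\<exists>\<beta>. beta_ok P s (hknown P s d f (GWN P s G N)) \<beta>) \<and>
         (\<forall>\<beta>. beta_ok P s (hknown P s d f (GWN P s G N)) \<beta> \<longrightarrow>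
            phi_out P s d f (GWN P s G N) \<beta> = {j. 1 \<le> j \<and> j \<le> P \<and> vv d f N (j - 1) \<noteq> 0})"
      by (rule main_det[OF assms(2)]) (simp only: eqA cardS)
    have "{j. 1 \<le> j \<and> j \<le> P \<and> vv d f N (j - 1) \<noteq> 0} = colsupp P d N"
    proof (rule set_eqI)
      fix j
      have "(1 \<le> j \<and> j \<le> P \<and> vv d f N (j - 1) \<noteq> 0) \<longleftrightarrow> (1 \<le> j \<and> j - 1 \<in> Sset)"
        using eqA[symmetric] by auto
      also have "\<dots> \<longleftrightarrow> j \<in> Suc ` Sset"
      proof
        assume "1 \<le> j \<and> j - 1 \<in> Sset"
        then have "j = Suc (j - 1)" "j - 1 \<in> Sset" by auto
        then show "j \<in> Suc ` Sset" by blast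
      next
        assume "j \<in> Suc ` Sset"
        then show "1 \<le> j \<and> j - 1 \<in> Sset" by auto
      qed
      finally show "j \<in> {j. 1 \<le> j \<and> j \<le> P \<and> vv d f N (j - 1) \<noteq> 0} \<longleftrightarrow> j \<in> colsupp P d N"
        unfolding cs by simp
    qed
    then show "(\<exists>\<beta>. beta_ok P s (hknown P s d f (GWN P s G N)) \<beta>) \<and>
           (\<forall>\<beta>. beta_ok P s (hknown P s d f (GWN P s G N)) \<beta> \<longrightarrow>
                 phi_out P s d f (GWN P s G N) \<beta> = colsupp P d N)"
      using md by simp
  qed
qed

end
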